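(* $\mathrm{Log}_{<1}(\mathbb{R})\not\subseteq\mathrm{Log}_{<1}(\mathbb{Q})$.
   Context: Modal formulas are built from a countable set of propositional variables using $\bot$, $\to$ and one unary modality $\lozenge$. A frame is a pair $(X,R)$; a valuation assigns subsets of $X$ to variables; $x\models\lozenge\varphi$ iff there is $y$ with $xRy$ and $y\models\varphi$. A formula is valid in a frame if true at every point under every valuation. For a metric space $(X,d)$, $\mathrm{Log}_{<1}(X)$ is the set of modal formulas valid in the frame $(X,R_{<1})$, where $xR_{<1}y$ iff $d(x,y)<1$. $\mathbb{R}$ and $\mathbb{Q}$ carry the metric $d(x,y)=|x-y|$. *)

theory Defs
  imports "HOL-Analysis.Analysis"
begin

datatype fm = Var nat | Bot | Imp fm fm | Dia fm

fun sat :: "'a set \<Rightarrow> ('a \<Rightarrow> 'a \<Rightarrow> bool) \<Rightarrow> (nat \<Rightarrow> 'a set) \<Rightarrow> 'a \<Rightarrow> fm \<Rightarrow> bool" where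
  "sat W R V x (Var p) = (x \<in> V p)"
| "sat W R V x Bot = False"
| "sat W R V x (Imp \<phi> \<psi>) = (sat W R V x \<phi> \<longrightarrow> sat W R V x \<psi>)"
| "sat W R V x (Dia \<phi>) = (\<exists>y\<in>W. R x y \<and> sat W R V y \<phi>)"

definition valid_in_frame :: "'a set \<Rightarrow> ('a \<Rightarrow> 'a \<Rightarrow> bool) \<Rightarrow> fm \<Rightarrow> bool" where
  "valid_in_frame W R \<phi> \<longleftrightarrow> (\<forall>V. (\<forall>p. V p \<subseteq> W) \<longrightarrow> (\<forall>x\<in>W. sat W R V x \<phi>))"

definition Log_lt1 :: "'a::metric_space set \<Rightarrow> fm set" where
  "Log_lt1 X = {\<phi>. valid_in_frame X (\<lambda>x y. dist x y < 1) \<phi>}"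

end

theory Submission
  imports Defs
begin

definition NotF :: "fm \<Rightarrow> fm" where "NotF a = Imp a Bot"
definition BoxF :: "fm \<Rightarrow> fm" where "BoxF a = NotF (Dia (NotF a))"
definition OrF :: "fm \<Rightarrow> fm \<Rightarrow> fm" where "OrF a b = Imp (NotF a) b"
definition AndF :: "fm \<Rightarrow> fm \<Rightarrow> fm" where "AndF a b = NotF (Imp a (NotF b))"
definition IffF :: "fm \<Rightarrow> fm \<Rightarrow> fm" where "IffF a b = AndF (Imp a b) (Imp b a)"

lemma sat_derived[simp]:
  "sat W R V x (NotF a) = (\<not> sat W R V x a)"
  "sat W R V x (BoxF a) = (\<forall>y\<in>W. R x y \<longrightarrow> sat W R V y a)"
  "sat W R V x (OrF a b) = (sat W R V x a \<or> sat W R V x b)"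
  "sat W R V x (AndF a b) = (sat W R V x a \<and> sat W R V x b)"
  "sat W R V x (IffF a b) = (sat W R V x a \<longleftrightarrow> sat W R V x b)"
  by (auto simp: NotF_def BoxF_def OrF_def AndF_def IffF_def)

definition theF :: fm where
  "theF = Imp (BoxF (IffF (BoxF (Var 0)) (Dia (Var 1))))
              (OrF (BoxF (BoxF (Var 0))) (BoxF (NotF (BoxF (Var 0)))))"

lemma valid_R: "theF \<in> Log_lt1 (UNIV :: real set)"
proof -
  have "sat UNIV (\<lambda>x y. dist x y < 1) V x theF" for V and x :: real
  proof -
    define A where "A = {y::real. \<forall>z. dist y z < 1 \<longrightarrow> z \<in> V 0}"
    define B where "B = {y::real. \<exists>z. dist y z < 1 \<and> z \<in> V 1}"
    have Aeq: "A = (\<Inter>z\<in>- V 0. - ball z 1)"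
      unfolding A_def by (auto simp: dist_commute)
    have cA: "closed A" unfolding Aeq by (intro closed_INT) auto
    have Beq: "B = (\<Union>z\<in>V 1. ball z 1)"
      unfolding B_def by (auto simp: dist_commute)
    have oB: "open B" unfolding Beq by auto
    have main: "(\<forall>y. dist x y < 1 \<longrightarrow> (\<forall>z. dist y z < 1 \<longrightarrow> z \<in> V 0)) \<or>
        (\<forall>y. dist x y < 1 \<longrightarrow> \<not> (\<forall>z. dist y z < 1 \<longrightarrow> z \<in> V 0))"
      if H: "\<forall>y. dist x y < 1 \<longrightarrow>
        ((\<forall>z. dist y z < 1 \<longrightarrow> z \<in> V 0) = (\<exists>z. dist y z < 1 \<and> z \<in> V 1))"
    proof -
      have HAB: "A \<inter> ball x 1 = B \<inter> ball x 1"
        using H unfolding A_def B_def by auto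
      have op: "openin (top_of_set (ball x 1)) (A \<inter> ball x 1)"
        using HAB oB by (metis inf_commute openin_open_Int)
      have cl: "closedin (top_of_set (ball x 1)) (A \<inter> ball x 1)"
        using cA by (metis inf_commute closedin_closed_Int)
      have "A \<inter> ball x 1 = {} \<or> A \<inter> ball x 1 = ball x 1"
        using connected_ball[of x 1] op cl unfolding connected_clopen by blast
      then show ?thesis
      proof
        assume E: "A \<inter> ball x 1 = {}"
        have "\<forall>y. dist x y < 1 \<longrightarrow> y \<notin> A"
        proof (intro allI impI)
          fix y assume "dist x y < 1"
          then have "y \<in> ball x 1" by simp
          with E show "y \<notin> A" by blast
        qed
        then show ?thesis unfolding A_def mem_Collect_eq by blast
      next
        assume E: "A \<inter> ball x 1 = ball x 1"
        have "\<forall>y. dist x y < 1 \<longrightarrow> y \<in> A"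
        proof (intro allI impI)
          fix y assume "dist x y < 1"
          then have "y \<in> ball x 1" by simp
          with E show "y \<in> A" by blast
        qed
        then show ?thesis unfolding A_def mem_Collect_eq by blast
      qed
    qed
    show ?thesis unfolding theF_def sat.simps sat_derived using main by blast
  qed
  then show ?thesis by (simp add: Log_lt1_def valid_in_frame_def)
qed

lemma irr: "\<exists>a::real. a \<notin> \<rat> \<and> 0 < a \<and> a < 1/2"
proof -
  have "uncountable {0<..<(1/2::real)}" by (simp add: uncountable_open_interval)
  then have "\<not> {0<..<(1/2::real)} \<subseteq> \<rat>"
    using countable_rat countable_subset by blast
  then show ?thesis by auto
qed

lemma not_valid_Q: "theF \<notin> Log_lt1 (\<rat> :: real set)"
proof
  assume v: "theF \<in> Log_lt1 (\<rat> :: real set)"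
  obtain a :: real where a: "a \<notin> \<rat>" "0 < a" "a < 1/2" using irr by blast
  define c where "c = a + 1"
  define V :: "nat \<Rightarrow> real set" where
    "V = (\<lambda>n. if n = 0 then {r\<in>\<rat>. r < c} else if n = 1 then {r\<in>\<rat>. r < c - 2} else {})"
  have Vs: "\<forall>p. V p \<subseteq> \<rat>" by (auto simp: V_def)
  have cQ: "y + 1 \<noteq> c" if "y \<in> \<rat>" for y
  proof
    assume "y + 1 = c"
    then have "a = y" by (simp add: c_def)
    with that a show False by simp
  qed
  have box: "(\<forall>z\<in>\<rat>. dist y z < 1 \<longrightarrow> z \<in> V 0) \<longleftrightarrow> y < c - 1" if y: "y \<in> \<rat>" for y
  proof
    assume L: "\<forall>z\<in>\<rat>. dist y z < 1 \<longrightarrow> z \<in> V 0"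
    show "y < c - 1"
    proof (rule ccontr)
      assume "\<not> y < c - 1"
      with cQ[OF y] have "c < y + 1" by auto
      then obtain z where z: "z \<in> \<rat>" "max c (y - 1) < z" "z < y + 1"
        using Rats_dense_in_real[of "max c (y-1)" "y+1"] by auto
      then have "dist y z < 1" by (auto simp: dist_real_def)
      with L z show False by (auto simp: V_def)
    qed
  next
    assume "y < c - 1"
    then show "\<forall>z\<in>\<rat>. dist y z < 1 \<longrightarrow> z \<in> V 0"
      by (auto simp: V_def dist_real_def)
  qed
  have dia: "(\<exists>z\<in>\<rat>. dist y z < 1 \<and> z \<in> V 1) \<longleftrightarrow> y < c - 1" if y: "y \<in> \<rat>" for y
  proof
    assume "\<exists>z\<in>\<rat>. dist y z < 1 \<and> z \<in> V 1"
    then show "y < c - 1" by (auto simp: V_def dist_real_def)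
  next
    assume "y < c - 1"
    then obtain z where z: "z \<in> \<rat>" "y - 1 < z" "z < min (y + 1) (c - 2)"
      using Rats_dense_in_real[of "y - 1" "min (y + 1) (c - 2)"] by auto
    then show "\<exists>z\<in>\<rat>. dist y z < 1 \<and> z \<in> V 1"
      by (intro bexI[of _ z]) (auto simp: V_def dist_real_def)
  qed
  have "sat \<rat> (\<lambda>x y. dist x y < 1) V 0 theF"
    using v Vs by (auto simp: Log_lt1_def valid_in_frame_def)
  moreover have "sat \<rat> (\<lambda>x y. dist x y < 1) V 0 (BoxF (IffF (BoxF (Var 0)) (Dia (Var 1))))"
    using box dia by simp
  moreover have "\<not> sat \<rat> (\<lambda>x y. dist x y < 1) V 0 (BoxF (BoxF (Var 0)))"
  proof -
    have h: "(1/2::real) \<in> \<rat>" by simp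
    have "\<not> (1/2::real) < c - 1" using a by (simp add: c_def)
    then have "\<not> (\<forall>z\<in>\<rat>. dist (1/2) z < 1 \<longrightarrow> z \<in> V 0)" using box[OF h] by blast
    then obtain z where "z \<in> \<rat>" "dist (1/2) z < 1" "z \<notin> V 0" by blast
    then show ?thesis using h by (simp add: dist_real_def) (intro bexI[of _ "1/2"], auto)
  qed
  moreover have "\<not> sat \<rat> (\<lambda>x y. dist x y < 1) V 0 (BoxF (NotF (BoxF (Var 0))))"
  proof -
    have "(0::real) < c - 1" using a by (simp add: c_def)
    then have "\<forall>z\<in>\<rat>. dist 0 z < 1 \<longrightarrow> z \<in> V 0" using box[of 0] by simp
    then show ?thesis by (simp add: dist_real_def) (intro bexI[of _ 0], auto)
  qed
  ultimately show False unfolding theF_def sat.simps sat_derived(3) by blast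
qed

theorem proposition4p9:
  shows "\<not> (Log_lt1 (UNIV :: real set) \<subseteq> Log_lt1 (\<rat> :: real set))"
  using valid_R not_valid_Q by blast

end
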